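(* Let $\Omega = \{-1\} \cup [0,\infty)$, let $E$ be the Banach space of all bounded continuous real functions on $\Omega$ with the supremum norm, and let $$C = \{ x \in E : 0 \le x(u) \le 1 \text{ for all } u \in \Omega,\ |x(u_1)-x(u_2)| \le |u_1-u_2| \text{ for all } u_1,u_2 \in [0,\infty)\}.$$ For $x \in C$ and $v \ge 0$ put $\alpha_x(v) = \sup\{ x(s) : s \in \{-1\}\cup[v,\infty)\}$. For $t \in [0,1]$ and $x \in C$ define $T(t)x$ on $\Omega$ by $$(T(t)x)(u) = \begin{cases} x(-1), & u=-1,\\ x(u-t), & u \ge t,\\ x(0)-t+u, & 0\le u\le t \text{ and } 1-\alpha_x(1-t+u) \le x(0)-t+u,\\ x(0)+t-u, & 0\le u\le t \text{ and } 1-\alpha_x(1-t+u) \ge x(0)+t-u,\\ 1-\alpha_x(1-t+u), & 0 \le u \le t \text{ and } |1-\alpha_x(1-t+u)-x(0)| \le t-u. \end{cases}$$ For $t > 1$, write $t = m/2 + t'$ with $m \in \mathbb N$ and $t' \in [0,1/2)$, and define $T(t) = T(1/2)^m \circ T(t')$. Then $C$ is a closed convex subset of $E$, $\{T(t): t\ge 0\}$ is a one-parameter nonexpansive semigroup on $C$, the zero function $0 \in C$ is not a common fixed point of $\{T(t) : t \ge 0\}$, and $$\lim_{t\to\infty} \left\| \frac{1}{t}\int_0^t T(s)0\, ds - 0 \right\| = 0.$$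
   Context: A family $\{T(t): t\ge 0\}$ of mappings on a subset $C$ of a Banach space is a one-parameter nonexpansive semigroup on $C$ if: each $T(t)$ is nonexpansive on $C$ ($\|T(t)x-T(t)y\|\le\|x-y\|$ for all $x,y\in C$); $T(0)x=x$ for all $x\in C$; $T(s+t)=T(s)\circ T(t)$ for all $s,t\ge 0$; and for each $x\in C$ the map $t\mapsto T(t)x$ is continuous. A common fixed point is a point $z\in C$ with $T(t)z=z$ for all $t\ge 0$. $\mathbb N$ denotes the set of positive integers. *)

theory Defs
  imports "HOL-Analysis.Analysis"
begin

typedef omega = "{-1::real} \<union> {0..}"
  by auto

instantiation omega :: metric_space
begin

definition dist_omega :: "omega \<Rightarrow> omega \<Rightarrow> real"
  where "dist_omega x y = dist (Rep_omega x) (Rep_omega y)"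

definition uniformity_omega :: "(omega \<times> omega) filter"
  where "uniformity_omega = (INF e\<in>{0<..}. principal {(x, y). dist x y < e})"

definition open_omega :: "omega set \<Rightarrow> bool"
  where "open_omega U \<longleftrightarrow> (\<forall>x\<in>U. \<forall>\<^sub>F (x', y) in uniformity. x' = x \<longrightarrow> y \<in> U)"

instance
proof
  fix x y z :: omega
  show "dist x y = 0 \<longleftrightarrow> x = y"
    by (simp add: dist_omega_def Rep_omega_inject)
  show "dist x y \<le> dist x z + dist y z"
    unfolding dist_omega_def by (rule dist_triangle2)
qed (simp_all add: uniformity_omega_def open_omega_def)

end

text \<open>The point u of Omega (meaningful for u = -1 or u \<ge> 0).\<close>
definition pt :: "real \<Rightarrow> omega" where "pt u = Abs_omega u"

type_synonym E = "(omega, real) bcontfun"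

definition Cset :: "E set" where
  "Cset = {x. (\<forall>u. 0 \<le> apply_bcontfun x u \<and> apply_bcontfun x u \<le> 1) \<and>
              (\<forall>u1\<ge>0. \<forall>u2\<ge>0. \<bar>apply_bcontfun x (pt u1) - apply_bcontfun x (pt u2)\<bar> \<le> \<bar>u1 - u2\<bar>)}"

definition alpha :: "E \<Rightarrow> real \<Rightarrow> real" where
  "alpha x v = (SUP s \<in> {s. Rep_omega s = -1 \<or> Rep_omega s \<ge> v}. apply_bcontfun x s)"

text \<open>T(t) for t in [0,1], as in the paper (the three cases for 0 \<le> u \<le> t are
  written as the clamp of 1 - alpha_x(1-t+u) to [x(0)-t+u, x(0)+t-u]).\<close>
definition Tbase_fun :: "real \<Rightarrow> E \<Rightarrow> omega \<Rightarrow> real" where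
  "Tbase_fun t x w =
     (let u = Rep_omega w; x0 = apply_bcontfun x (pt 0); a = 1 - alpha x (1 - t + u) in
      if u = -1 then apply_bcontfun x (pt (-1))
      else if u \<ge> t then apply_bcontfun x (pt (u - t))
      else if a \<le> x0 - t + u then x0 - t + u
      else if a \<ge> x0 + t - u then x0 + t - u
      else a)"

definition Tbase :: "real \<Rightarrow> E \<Rightarrow> E" where
  "Tbase t x = Bcontfun (Tbase_fun t x)"

definition Tsg :: "real \<Rightarrow> E \<Rightarrow> E" where
  "Tsg t = (if t \<le> 1 then Tbase t
            else (Tbase (1/2) ^^ nat \<lfloor>2 * t\<rfloor>) \<circ> Tbase (t - real_of_int \<lfloor>2 * t\<rfloor> / 2))"

definition nonexp_semigroup :: "'a::real_normed_vector set \<Rightarrow> (real \<Rightarrow> 'a \<Rightarrow> 'a) \<Rightarrow> bool" where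
  "nonexp_semigroup C T \<longleftrightarrow>
     (\<forall>t\<ge>0. \<forall>x\<in>C. T t x \<in> C) \<and>
     (\<forall>t\<ge>0. \<forall>x\<in>C. \<forall>y\<in>C. norm (T t x - T t y) \<le> norm (x - y)) \<and>
     (\<forall>x\<in>C. T 0 x = x) \<and>
     (\<forall>s\<ge>0. \<forall>t\<ge>0. \<forall>x\<in>C. T (s + t) x = T s (T t x)) \<and>
     (\<forall>x\<in>C. continuous_on {0..} (\<lambda>t. T t x))"

definition common_fixed_point :: "'a set \<Rightarrow> (real \<Rightarrow> 'a \<Rightarrow> 'a) \<Rightarrow> 'a \<Rightarrow> bool" where
  "common_fixed_point C T z \<longleftrightarrow> z \<in> C \<and> (\<forall>t\<ge>0. T t z = z)"

end

theory Submission
  imports Defs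
begin


definition cl :: "real \<Rightarrow> real \<Rightarrow> real \<Rightarrow> real" where
  "cl a l h = max l (min a h)"

definition L1 :: "(omega \<Rightarrow> real) \<Rightarrow> bool" where
  "L1 f \<longleftrightarrow> (\<forall>w. 0 \<le> f w \<and> f w \<le> 1) \<and>
     (\<forall>u1\<ge>0. \<forall>u2\<ge>0. \<bar>f (pt u1) - f (pt u2)\<bar> \<le> \<bar>u1 - u2\<bar>)"

lemma Rep_pt: "u = -1 \<or> u \<ge> 0 \<Longrightarrow> Rep_omega (pt u) = u"
  by (simp add: pt_def Abs_omega_inverse)

lemma Rep_pt0[simp]: "u \<ge> 0 \<Longrightarrow> Rep_omega (pt u) = u"
  by (simp add: Rep_pt)

lemma Rep_ptm1[simp]: "Rep_omega (pt (-1)) = -1"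
  by (simp add: Rep_pt)

lemma pt_Rep[simp]: "pt (Rep_omega w) = w"
  by (simp add: pt_def Rep_omega_inverse)

lemma Rep_cases: "Rep_omega w = -1 \<or> Rep_omega w \<ge> 0"
  using Rep_omega[of w] by auto

lemma dist_om: "dist w w' = \<bar>Rep_omega w - Rep_omega w'\<bar>"
  by (simp add: dist_omega_def dist_real_def)

lemma L1_lip:
  assumes "L1 f" shows "\<bar>f w - f w'\<bar> \<le> dist w w'"
proof -
  have b: "0 \<le> f w" "f w \<le> 1" "0 \<le> f w'" "f w' \<le> 1" using assms by (auto simp: L1_def)
  consider "Rep_omega w = -1" "Rep_omega w' = -1" | "Rep_omega w = -1" "Rep_omega w' \<ge> 0"
    | "Rep_omega w \<ge> 0" "Rep_omega w' = -1" | "Rep_omega w \<ge> 0" "Rep_omega w' \<ge> 0"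
    using Rep_cases by blast
  then show ?thesis
  proof cases
    case 1
    then have "w = w'" by (metis pt_Rep)
    then show ?thesis by simp
  next
    case 2 then show ?thesis using b by (simp add: dist_om)
  next
    case 3 then show ?thesis using b by (simp add: dist_om)
  next
    case 4
    then have "\<bar>f (pt (Rep_omega w)) - f (pt (Rep_omega w'))\<bar> \<le> \<bar>Rep_omega w - Rep_omega w'\<bar>"
      using assms unfolding L1_def by blast
    then show ?thesis by (simp add: dist_om)
  qed
qed

lemma L1_bcontfun: assumes "L1 f" shows "f \<in> bcontfun"
proof (rule bcontfun_normI)
  show "continuous_on UNIV f"
    unfolding continuous_on_iff
  proof (intro ballI allI impI)
    fix x :: omega and e :: real assume "0 < e"
    show "\<exists>d>0. \<forall>x'\<in>UNIV. dist x' x < d \<longrightarrow> dist (f x') (f x) < e"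
      using L1_lip[OF assms] \<open>0 < e\<close> by (metis UNIV_I dist_real_def le_less_trans)
  qed
  show "norm (f x) \<le> 1" for x using assms by (auto simp: L1_def)
qed

lemma L1_Bc: "L1 f \<Longrightarrow> apply_bcontfun (Bcontfun f) = f"
  using L1_bcontfun Bcontfun_inverse by blast

lemma Cset_iff: "x \<in> Cset \<longleftrightarrow> L1 (apply_bcontfun x)"
  by (simp add: Cset_def L1_def)

lemma L1_Cset: "L1 f \<Longrightarrow> Bcontfun f \<in> Cset"
  by (simp add: Cset_iff L1_Bc)

lemma Cset_b: "x \<in> Cset \<Longrightarrow> 0 \<le> apply_bcontfun x w \<and> apply_bcontfun x w \<le> 1"
  by (simp add: Cset_def)

lemma Cset_lip: "x \<in> Cset \<Longrightarrow> 0 \<le> u1 \<Longrightarrow> 0 \<le> u2 \<Longrightarrow>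
   \<bar>apply_bcontfun x (pt u1) - apply_bcontfun x (pt u2)\<bar> \<le> \<bar>u1 - u2\<bar>"
  by (simp add: Cset_def)

lemma alpha_ub:
  assumes "x \<in> Cset" "Rep_omega s = -1 \<or> Rep_omega s \<ge> v"
  shows "apply_bcontfun x s \<le> alpha x v"
  unfolding alpha_def
proof (rule cSUP_upper)
  show "s \<in> {s. Rep_omega s = - 1 \<or> v \<le> Rep_omega s}" using assms(2) by auto
  show "bdd_above (apply_bcontfun x ` {s. Rep_omega s = - 1 \<or> v \<le> Rep_omega s})"
    using Cset_b[OF assms(1)] by (intro bdd_aboveI2[where M=1]) auto
qed

lemma alpha_least:
  assumes "\<And>s. Rep_omega s = -1 \<or> Rep_omega s \<ge> v \<Longrightarrow> apply_bcontfun x s \<le> M"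
  shows "alpha x v \<le> M"
  unfolding alpha_def
proof (rule cSUP_least)
  show "{s. Rep_omega s = - 1 \<or> v \<le> Rep_omega s} \<noteq> {}"
    using Rep_ptm1 by blast
qed (use assms in auto)

lemma alpha_bounds: "x \<in> Cset \<Longrightarrow> 0 \<le> alpha x v \<and> alpha x v \<le> 1"
  using alpha_ub[of x "pt (-1)" v] Cset_b[of x] alpha_least[of v x 1]
  by (metis Rep_ptm1 order_trans)

lemma alpha_mono: "x \<in> Cset \<Longrightarrow> v \<le> v' \<Longrightarrow> alpha x v' \<le> alpha x v"
  by (rule alpha_least) (auto intro: alpha_ub)

lemma alpha_lip:
  assumes "x \<in> Cset" "0 \<le> v" "v \<le> v'"
  shows "alpha x v \<le> alpha x v' + (v' - v)"
proof (rule alpha_least)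
  fix s assume s: "Rep_omega s = -1 \<or> Rep_omega s \<ge> v"
  show "apply_bcontfun x s \<le> alpha x v' + (v' - v)"
  proof (cases "Rep_omega s = -1 \<or> Rep_omega s \<ge> v'")
    case True
    then show ?thesis using alpha_ub[OF assms(1) True] assms by linarith
  next
    case False
    then have r: "v \<le> Rep_omega s" "Rep_omega s < v'" using s by auto
    have "\<bar>apply_bcontfun x (pt (Rep_omega s)) - apply_bcontfun x (pt v')\<bar> \<le> \<bar>Rep_omega s - v'\<bar>"
      using Cset_lip[OF assms(1), of "Rep_omega s" v'] r assms by simp
    moreover have "apply_bcontfun x (pt v') \<le> alpha x v'"
      using alpha_ub[OF assms(1), of "pt v'" v'] assms by simp
    ultimately show ?thesis using r by simp
  qed
qed

lemma alpha_diff: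
  assumes "x \<in> Cset" "y \<in> Cset"
  shows "alpha x v \<le> alpha y v + norm (x - y)"
proof (rule alpha_least)
  fix s assume s: "Rep_omega s = -1 \<or> Rep_omega s \<ge> v"
  have "apply_bcontfun x s - apply_bcontfun y s \<le> norm (x - y)"
    using norm_bounded[of "x - y" s] by simp
  then show "apply_bcontfun x s \<le> alpha y v + norm (x - y)"
    using alpha_ub[OF assms(2) s] by linarith
qed



lemma TF_m1: "Tbase_fun t x (pt (-1)) = apply_bcontfun x (pt (-1))"
  by (simp add: Tbase_fun_def Let_def)

lemma TF_ge: "0 \<le> t \<Longrightarrow> t \<le> u \<Longrightarrow> Tbase_fun t x (pt u) = apply_bcontfun x (pt (u - t))"
  by (simp add: Tbase_fun_def Let_def)

lemma TF_lt: assumes "0 \<le> u" "u \<le> t"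
  shows "Tbase_fun t x (pt u) = cl (1 - alpha x (1 - t + u))
     (apply_bcontfun x (pt 0) - (t - u)) (apply_bcontfun x (pt 0) + (t - u))"
proof (cases "u = t")
  case True then show ?thesis using assms by (simp add: Tbase_fun_def Let_def cl_def)
next
  case False
  then have "u < t" using assms by simp
  then show ?thesis using assms by (auto simp add: Tbase_fun_def Let_def cl_def)
qed

lemma cl_lip: "\<bar>a - a'\<bar> \<le> d \<Longrightarrow> \<bar>l - l'\<bar> \<le> d \<Longrightarrow> \<bar>h - h'\<bar> \<le> d \<Longrightarrow> \<bar>cl a l h - cl a' l' h'\<bar> \<le> d"
  unfolding cl_def abs_le_iff by (smt (verit))

lemma piecewise_lip:
  fixes F :: "real \<Rightarrow> real"
  assumes "0 \<le> t"
    and lo: "\<And>a b. 0 \<le> a \<Longrightarrow> a \<le> t \<Longrightarrow> 0 \<le> b \<Longrightarrow> b \<le> t \<Longrightarrow> \<bar>F a - F b\<bar> \<le> \<bar>a - b\<bar>"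
    and hi: "\<And>a b. t \<le> a \<Longrightarrow> t \<le> b \<Longrightarrow> \<bar>F a - F b\<bar> \<le> \<bar>a - b\<bar>"
    and "0 \<le> u1" "0 \<le> u2"
  shows "\<bar>F u1 - F u2\<bar> \<le> \<bar>u1 - u2\<bar>"
proof -
  consider "u1 \<le> t" "u2 \<le> t" | "t \<le> u1" "t \<le> u2" | "u1 \<le> t" "t \<le> u2" | "u2 \<le> t" "t \<le> u1"
    by linarith
  then show ?thesis
  proof cases
    case 1 then show ?thesis using lo assms by auto
  next
    case 2 then show ?thesis using hi by auto
  next
    case 3
    have "\<bar>F u1 - F t\<bar> \<le> \<bar>u1 - t\<bar>" using lo[of u1 t] 3 assms by auto
    moreover have "\<bar>F t - F u2\<bar> \<le> \<bar>t - u2\<bar>" using hi[of t u2] 3 by auto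
    ultimately show ?thesis using 3 by linarith
  next
    case 4
    have "\<bar>F u2 - F t\<bar> \<le> \<bar>u2 - t\<bar>" using lo[of u2 t] 4 assms by auto
    moreover have "\<bar>F t - F u1\<bar> \<le> \<bar>t - u1\<bar>" using hi[of t u1] 4 by auto
    ultimately show ?thesis using 4 by linarith
  qed
qed

lemma alpha_lip2:
  assumes "x \<in> Cset" "0 \<le> v" "0 \<le> v'"
  shows "\<bar>alpha x v - alpha x v'\<bar> \<le> \<bar>v - v'\<bar>"
  using alpha_lip[OF assms(1,2), of v'] alpha_mono[OF assms(1), of v v']
    alpha_lip[OF assms(1,3), of v] alpha_mono[OF assms(1), of v' v]
  by (cases "v \<le> v'") (auto simp: abs_le_iff)

lemma L1_Tbase:
  assumes x: "x \<in> Cset" and t: "0 \<le> t" "t \<le> 1"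
  shows "L1 (Tbase_fun t x)"
proof -
  let ?x0 = "apply_bcontfun x (pt 0)"
  have x0: "0 \<le> ?x0" "?x0 \<le> 1" using Cset_b[OF x] by auto
  have bnd: "0 \<le> Tbase_fun t x w \<and> Tbase_fun t x w \<le> 1" for w
  proof -
    consider "Rep_omega w = -1" | "Rep_omega w \<ge> t" | "0 \<le> Rep_omega w" "Rep_omega w \<le> t"
      using Rep_cases[of w] by linarith
    then show ?thesis
    proof cases
      case 1
      then have "w = pt (-1)" by (metis pt_Rep)
      then show ?thesis using TF_m1 Cset_b[OF x] by simp
    next
      case 2
      then have "w = pt (Rep_omega w)" by simp
      then show ?thesis using TF_ge[OF t(1) 2, of x] Cset_b[OF x] by metis
    next
      case 3
      have "w = pt (Rep_omega w)" by simp
      moreover have "0 \<le> alpha x (1 - t + Rep_omega w) \<and> alpha x (1 - t + Rep_omega w) \<le> 1"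
        using alpha_bounds[OF x] by blast
      ultimately show ?thesis using TF_lt[OF 3, of x] x0 3 unfolding cl_def
        by (smt (verit))
    qed
  qed
  have lip: "\<bar>Tbase_fun t x (pt u1) - Tbase_fun t x (pt u2)\<bar> \<le> \<bar>u1 - u2\<bar>"
    if "0 \<le> u1" "0 \<le> u2" for u1 u2
  proof (rule piecewise_lip[where F="\<lambda>u. Tbase_fun t x (pt u)", OF t(1) _ _ that])
    fix a b assume ab: "0 \<le> a" "a \<le> t" "0 \<le> b" "b \<le> t"
    have "\<bar>alpha x (1 - t + a) - alpha x (1 - t + b)\<bar> \<le> \<bar>(1 - t + a) - (1 - t + b)\<bar>"
      using alpha_lip2[OF x, of "1 - t + a" "1 - t + b"] ab t by simp
    then have "\<bar>(1 - alpha x (1 - t + a)) - (1 - alpha x (1 - t + b))\<bar> \<le> \<bar>a - b\<bar>" by simp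
    then show "\<bar>Tbase_fun t x (pt a) - Tbase_fun t x (pt b)\<bar> \<le> \<bar>a - b\<bar>"
      unfolding TF_lt[OF ab(1,2)] TF_lt[OF ab(3,4)] by (rule cl_lip) auto
  next
    fix a b assume ab: "t \<le> a" "t \<le> b"
    show "\<bar>Tbase_fun t x (pt a) - Tbase_fun t x (pt b)\<bar> \<le> \<bar>a - b\<bar>"
      unfolding TF_ge[OF t(1) ab(1)] TF_ge[OF t(1) ab(2)]
      using Cset_lip[OF x, of "a - t" "b - t"] ab by simp
  qed
  show ?thesis unfolding L1_def using bnd lip by blast
qed

lemma Tbase_app: "x \<in> Cset \<Longrightarrow> 0 \<le> t \<Longrightarrow> t \<le> 1 \<Longrightarrow> apply_bcontfun (Tbase t x) = Tbase_fun t x"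
  unfolding Tbase_def using L1_Tbase L1_Bc by blast

lemma Tbase_C: "x \<in> Cset \<Longrightarrow> 0 \<le> t \<Longrightarrow> t \<le> 1 \<Longrightarrow> Tbase t x \<in> Cset"
  unfolding Tbase_def using L1_Tbase L1_Cset by blast



lemma om_cases: "P (pt (-1)) \<Longrightarrow> (\<And>u. 0 \<le> u \<Longrightarrow> P (pt u)) \<Longrightarrow> P w"
  by (metis Rep_cases pt_Rep)

lemma Tbase0: assumes "x \<in> Cset" shows "Tbase 0 x = x"
proof (rule bcontfun_eqI)
  fix w show "apply_bcontfun (Tbase 0 x) w = apply_bcontfun x w"
    unfolding Tbase_app[OF assms order.refl zero_le_one]
    by (rule om_cases[of _ w]) (auto simp: TF_m1 TF_ge)
qed

lemma alpha_shift:
  assumes x: "x \<in> Cset" and t: "0 \<le> t" "t \<le> 1" and v: "t \<le> v"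
  shows "alpha (Tbase t x) v = alpha x (v - t)"
proof (rule antisym)
  have y: "Tbase t x \<in> Cset" using Tbase_C[OF x t] .
  note ya = Tbase_app[OF x t]
  show "alpha (Tbase t x) v \<le> alpha x (v - t)"
  proof (rule alpha_least)
    fix s assume s: "Rep_omega s = -1 \<or> Rep_omega s \<ge> v"
    show "apply_bcontfun (Tbase t x) s \<le> alpha x (v - t)"
    proof (cases "Rep_omega s = -1")
      case True
      then have "s = pt (-1)" by (metis pt_Rep)
      then show ?thesis using ya TF_m1 alpha_ub[OF x, of "pt (-1)" "v - t"] by simp
    next
      case False
      then have r: "Rep_omega s \<ge> v" using s by auto
      have "s = pt (Rep_omega s)" by simp
      then have "apply_bcontfun (Tbase t x) s = apply_bcontfun x (pt (Rep_omega s - t))"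
        using ya TF_ge[OF t(1), of "Rep_omega s" x] r v by simp
      then show ?thesis using alpha_ub[OF x, of "pt (Rep_omega s - t)" "v - t"] r v t by simp
    qed
  qed
  show "alpha x (v - t) \<le> alpha (Tbase t x) v"
  proof (rule alpha_least)
    fix s assume s: "Rep_omega s = -1 \<or> Rep_omega s \<ge> v - t"
    show "apply_bcontfun x s \<le> alpha (Tbase t x) v"
    proof (cases "Rep_omega s = -1")
      case True
      then have "s = pt (-1)" by (metis pt_Rep)
      then show ?thesis using ya TF_m1 alpha_ub[OF y, of "pt (-1)" v] by simp
    next
      case False
      then have r: "Rep_omega s \<ge> v - t" "Rep_omega s \<ge> 0" using s Rep_cases[of s] by auto
      have "apply_bcontfun (Tbase t x) (pt (Rep_omega s + t)) = apply_bcontfun x s"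
        using ya TF_ge[OF t(1), of "Rep_omega s + t" x] r by simp
      then show ?thesis using alpha_ub[OF y, of "pt (Rep_omega s + t)" v] r v t by simp
    qed
  qed
qed

lemma cl_comp:
  assumes "0 \<le> t" "0 \<le> r" "A \<le> B" "B - A \<le> r"
  shows "cl A (cl B (x0 - t) (x0 + t) - r) (cl B (x0 - t) (x0 + t) + r) = cl A (x0 - t - r) (x0 + t + r)"
  using assms unfolding cl_def by (smt (verit))

lemma Tbase_semi:
  assumes x: "x \<in> Cset" and st: "0 \<le> s" "0 \<le> t" "s + t \<le> 1"
  shows "Tbase s (Tbase t x) = Tbase (s + t) x"
proof (rule bcontfun_eqI)
  fix w
  have t1: "t \<le> 1" "s \<le> 1" using st by auto
  have y: "Tbase t x \<in> Cset" using Tbase_C[OF x st(2) t1(1)] .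
  note ya = Tbase_app[OF x st(2) t1(1)]
  note ya2 = Tbase_app[OF y st(1) t1(2)]
  note za = Tbase_app[OF x _ st(3)]
  let ?x0 = "apply_bcontfun x (pt 0)"
  show "apply_bcontfun (Tbase s (Tbase t x)) w = apply_bcontfun (Tbase (s + t) x) w"
    unfolding ya2 za[OF add_nonneg_nonneg[OF st(1,2)]]
  proof (rule om_cases[of _ w])
    show "Tbase_fun s (Tbase t x) (pt (- 1)) = Tbase_fun (s + t) x (pt (- 1))"
      by (simp add: TF_m1 ya)
  next
    fix u :: real assume u: "0 \<le> u"
    consider "s + t \<le> u" | "s \<le> u" "u \<le> s + t" | "u \<le> s" by linarith
    then show "Tbase_fun s (Tbase t x) (pt u) = Tbase_fun (s + t) x (pt u)"
    proof cases
      case 1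
      then show ?thesis using st by (simp add: TF_ge ya diff_diff_eq)
    next
      case 2
      have "Tbase_fun s (Tbase t x) (pt u) = Tbase_fun t x (pt (u - s))"
        using TF_ge[OF st(1) 2(1)] ya by simp
      also have "\<dots> = cl (1 - alpha x (1 - t + (u - s))) (?x0 - (t - (u - s))) (?x0 + (t - (u - s)))"
        using TF_lt[of "u - s" t x] 2 by simp
      also have "\<dots> = cl (1 - alpha x (1 - (s + t) + u)) (?x0 - ((s + t) - u)) (?x0 + ((s + t) - u))"
        by (simp add: algebra_simps)
      also have "\<dots> = Tbase_fun (s + t) x (pt u)"
        using TF_lt[of u "s + t" x] 2 u by simp
      finally show ?thesis .
    next
      case 3
      let ?A = "1 - alpha x (1 - (s + t) + u)" and ?B = "1 - alpha x (1 - t)"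
      have y0: "apply_bcontfun (Tbase t x) (pt 0) = cl ?B (?x0 - t) (?x0 + t)"
        using ya TF_lt[of 0 t x] st by simp
      have al: "alpha (Tbase t x) (1 - s + u) = alpha x (1 - (s + t) + u)"
        using alpha_shift[OF x st(2) t1(1), of "1 - s + u"] st u by (simp add: algebra_simps)
      have "Tbase_fun s (Tbase t x) (pt u) =
          cl ?A (cl ?B (?x0 - t) (?x0 + t) - (s - u)) (cl ?B (?x0 - t) (?x0 + t) + (s - u))"
        using TF_lt[OF u 3, of "Tbase t x"] y0 al by simp
      also have "\<dots> = cl ?A (?x0 - t - (s - u)) (?x0 + t + (s - u))"
      proof (rule cl_comp)
        show "?A \<le> ?B" using alpha_mono[OF x, of "1 - (s + t) + u" "1 - t"] 3 by simp
        show "?B - ?A \<le> s - u" proof -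
          have "0 \<le> 1 - (s + t) + u" "1 - (s + t) + u \<le> 1 - t" using 3 st u by auto
          from alpha_lip[OF x this] show ?thesis by linarith
        qed
      qed (use st 3 in auto)
      also have "\<dots> = Tbase_fun (s + t) x (pt u)"
        using TF_lt[of u "s + t" x] 3 u st by (simp add: algebra_simps)
      finally show ?thesis .
    qed
  qed
qed

lemma Tbase_nonexp:
  assumes x: "x \<in> Cset" and y: "y \<in> Cset" and t: "0 \<le> t" "t \<le> 1"
  shows "norm (Tbase t x - Tbase t y) \<le> norm (x - y)"
proof (rule norm_bound)
  fix w
  have pw: "\<bar>apply_bcontfun x w' - apply_bcontfun y w'\<bar> \<le> norm (x - y)" for w'
    using norm_bounded[of "x - y" w'] by simp
  have "\<bar>Tbase_fun t x w - Tbase_fun t y w\<bar> \<le> norm (x - y)"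
  proof (rule om_cases[of _ w])
    show "\<bar>Tbase_fun t x (pt (- 1)) - Tbase_fun t y (pt (- 1))\<bar> \<le> norm (x - y)"
      using pw by (simp add: TF_m1)
  next
    fix u :: real assume u: "0 \<le> u"
    show "\<bar>Tbase_fun t x (pt u) - Tbase_fun t y (pt u)\<bar> \<le> norm (x - y)"
    proof (cases "t \<le> u")
      case True then show ?thesis using pw t by (simp add: TF_ge)
    next
      case False
      then have uu: "u \<le> t" by simp
      have "\<bar>alpha x (1 - t + u) - alpha y (1 - t + u)\<bar> \<le> norm (x - y)"
        using alpha_diff[OF x y, of "1 - t + u"] alpha_diff[OF y x, of "1 - t + u"]
        by (simp add: norm_minus_commute)
      then show ?thesis unfolding TF_lt[OF u uu]
        by (intro cl_lip) (use pw[of "pt 0"] in auto)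
    qed
  qed
  then show "norm (apply_bcontfun (Tbase t x - Tbase t y) w) \<le> norm (x - y)"
    by (simp add: Tbase_app[OF x t] Tbase_app[OF y t])
qed

lemma Tbase_near:
  assumes x: "x \<in> Cset" and t: "0 \<le> t" "t \<le> 1"
  shows "norm (Tbase t x - x) \<le> t"
proof (rule norm_bound)
  fix w
  have "\<bar>Tbase_fun t x w - apply_bcontfun x w\<bar> \<le> t"
  proof (rule om_cases[of _ w])
    show "\<bar>Tbase_fun t x (pt (- 1)) - apply_bcontfun x (pt (- 1))\<bar> \<le> t"
      using t by (simp add: TF_m1)
  next
    fix u :: real assume u: "0 \<le> u"
    show "\<bar>Tbase_fun t x (pt u) - apply_bcontfun x (pt u)\<bar> \<le> t"
    proof (cases "t \<le> u")
      case True then show ?thesis using Cset_lip[OF x, of "u - t" u] t u by (simp add: TF_ge)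
    next
      case False
      then have uu: "u \<le> t" by simp
      have "\<bar>apply_bcontfun x (pt u) - apply_bcontfun x (pt 0)\<bar> \<le> u"
        using Cset_lip[OF x, of u 0] u by simp
      then show ?thesis unfolding TF_lt[OF u uu] cl_def using uu by (smt (verit))
    qed
  qed
  then show "norm (apply_bcontfun (Tbase t x - x) w) \<le> t"
    by (simp add: Tbase_app[OF x t])
qed



definition Nf :: "real \<Rightarrow> E \<Rightarrow> E" where
  "Nf t = (Tbase (1/2) ^^ nat \<lfloor>2 * t\<rfloor>) \<circ> Tbase (t - real_of_int \<lfloor>2 * t\<rfloor> / 2)"

lemma Ppow_C: "x \<in> Cset \<Longrightarrow> (Tbase (1/2) ^^ m) x \<in> Cset"
  by (induction m) (auto intro: Tbase_C)

lemma P_comm: assumes "z \<in> Cset" "0 \<le> h" "h \<le> 1/2"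
  shows "Tbase h (Tbase (1/2) z) = Tbase (1/2) (Tbase h z)"
  using Tbase_semi[OF assms(1), of h "1/2"] Tbase_semi[OF assms(1), of "1/2" h] assms
  by (simp add: add.commute)

lemma Ppow_comm: assumes "x \<in> Cset" "0 \<le> h" "h \<le> 1/2"
  shows "Tbase h ((Tbase (1/2) ^^ m) x) = (Tbase (1/2) ^^ m) (Tbase h x)"
proof (induction m)
  case 0 then show ?case by simp
next
  case (Suc m)
  have "Tbase h ((Tbase (1/2) ^^ Suc m) x) = Tbase h (Tbase (1/2) ((Tbase (1/2) ^^ m) x))" by simp
  also have "\<dots> = Tbase (1/2) (Tbase h ((Tbase (1/2) ^^ m) x))"
    using P_comm[OF Ppow_C[OF assms(1)] assms(2,3)] by simp
  also have "\<dots> = (Tbase (1/2) ^^ Suc m) (Tbase h x)" using Suc by simp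
  finally show ?case .
qed

lemma fl_facts:
  assumes "0 \<le> t"
  shows "real (nat \<lfloor>2 * t\<rfloor>) = real_of_int \<lfloor>2 * t\<rfloor>"
    "0 \<le> t - real_of_int \<lfloor>2 * t\<rfloor> / 2" "t - real_of_int \<lfloor>2 * t\<rfloor> / 2 < 1/2"
proof -
  have "0 \<le> \<lfloor>2 * t\<rfloor>" using assms by simp
  then show "real (nat \<lfloor>2 * t\<rfloor>) = real_of_int \<lfloor>2 * t\<rfloor>" by simp
  show "0 \<le> t - real_of_int \<lfloor>2 * t\<rfloor> / 2" using of_int_floor_le[of "2 * t"] by linarith
  show "t - real_of_int \<lfloor>2 * t\<rfloor> / 2 < 1/2" using real_of_int_floor_add_one_gt[of "2 * t"] by linarith
qed

lemma Nf_C: assumes "x \<in> Cset" "0 \<le> t" shows "Nf t x \<in> Cset"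
  using fl_facts[OF assms(2)] by (auto simp: Nf_def intro!: Ppow_C Tbase_C assms(1))

lemma Tsg_Nf: assumes x: "x \<in> Cset" and t: "0 \<le> t" shows "Tsg t x = Nf t x"
proof (cases "t \<le> 1")
  case False then show ?thesis by (simp add: Tsg_def Nf_def)
next
  case True
  have k: "0 \<le> \<lfloor>2 * t\<rfloor>" "\<lfloor>2 * t\<rfloor> \<le> 2" using t True by (simp, linarith)
  then consider "\<lfloor>2 * t\<rfloor> = 0" | "\<lfloor>2 * t\<rfloor> = 1" | "\<lfloor>2 * t\<rfloor> = 2" by arith
  then show ?thesis
  proof cases
    case 1 then show ?thesis using True by (simp add: Tsg_def Nf_def)
  next
    case 2
    then have "1/2 \<le> t" by linarith
    then have "Tbase (1/2) (Tbase (t - 1/2) x) = Tbase t x"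
      using Tbase_semi[OF x, of "1/2" "t - 1/2"] True by simp
    then show ?thesis using True 2 by (simp add: Tsg_def Nf_def)
  next
    case 3
    then have "t = 1" using True by linarith
    have "Tbase (1/2) (Tbase (1/2) x) = Tbase 1 x"
      using Tbase_semi[OF x, of "1/2" "1/2"] by simp
    then show ?thesis using \<open>t = 1\<close> by (simp add: Tsg_def Nf_def numeral_2_eq_2 Tbase0[OF x])
  qed
qed

lemma Nf_step:
  assumes x: "x \<in> Cset" and t: "0 \<le> t" and h: "0 \<le> h" "h \<le> 1/2"
  shows "Nf (t + h) x = Tbase h (Nf t x)"
proof -
  define k where "k = \<lfloor>2 * t\<rfloor>"
  define r where "r = t - real_of_int k / 2"
  have r: "0 \<le> r" "r < 1/2" using fl_facts[OF t] by (auto simp: r_def k_def)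
  have k0: "0 \<le> k" using t by (simp add: k_def)
  have Nt: "Nf t x = (Tbase (1/2) ^^ nat k) (Tbase r x)" by (simp add: Nf_def k_def r_def)
  have Tr: "Tbase r x \<in> Cset" using Tbase_C[OF x r(1)] r by simp
  show ?thesis
  proof (cases "r + h < 1/2")
    case True
    have fk: "\<lfloor>2 * (t + h)\<rfloor> = k"
      unfolding floor_eq_iff using r h True by (simp add: r_def algebra_simps)
    have e: "t + h - real_of_int k / 2 = r + h" unfolding r_def by simp
    have "Nf (t + h) x = (Tbase (1/2) ^^ nat k) (Tbase (r + h) x)"
      unfolding Nf_def o_apply fk e ..
    also have "Tbase (r + h) x = Tbase h (Tbase r x)"
      using Tbase_semi[OF x, of h r] r h True by (simp add: add.commute)
    also have "(Tbase (1/2) ^^ nat k) (Tbase h (Tbase r x)) = Tbase h (Nf t x)"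
      using Ppow_comm[OF Tr h] Nt by simp
    finally show ?thesis .
  next
    case False
    have "\<lfloor>2 * (t + h)\<rfloor> = k + 1"
      unfolding floor_eq_iff using r h False by (simp add: r_def algebra_simps)
    have nk: "nat (k + 1) = Suc (nat k)" using k0 by simp
    have e: "t + h - real_of_int (k + 1) / 2 = r + h - 1/2"
      unfolding r_def by (simp add: field_simps)
    have "Nf (t + h) x = (Tbase (1/2) ^^ Suc (nat k)) (Tbase (r + h - 1/2) x)"
      unfolding Nf_def o_apply \<open>\<lfloor>2 * (t + h)\<rfloor> = k + 1\<close> nk e ..
    also have "\<dots> = (Tbase (1/2) ^^ nat k) (Tbase (1/2) (Tbase (r + h - 1/2) x))"
      by (simp only: funpow_Suc_right o_apply)
    also have "Tbase (1/2) (Tbase (r + h - 1/2) x) = Tbase (r + h) x"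
      using Tbase_semi[OF x, of "1/2" "r + h - 1/2"] r h False by simp
    also have "Tbase (r + h) x = Tbase h (Tbase r x)"
      using Tbase_semi[OF x, of h r] r h by (simp add: add.commute)
    also have "(Tbase (1/2) ^^ nat k) (Tbase h (Tbase r x)) = Tbase h (Nf t x)"
      using Ppow_comm[OF Tr h] Nt by simp
    finally show ?thesis .
  qed
qed

lemma Nf_semi:
  assumes x: "x \<in> Cset" and s: "0 \<le> s" and t: "0 \<le> t"
  shows "Nf (s + t) x = Nf s (Nf t x)"
proof -
  have gen: "Nf (t + r + real m / 2) x = (Tbase (1/2) ^^ m) (Tbase r (Nf t x))"
    if r: "0 \<le> r" "r \<le> 1/2" for r m
  proof (induction m)
    case 0 then show ?case using Nf_step[OF x t r] by simp
  next
    case (Suc m)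
    have "Nf (t + r + real (Suc m) / 2) x = Nf ((t + r + real m / 2) + 1/2) x"
      by (simp add: algebra_simps add_divide_distrib)
    also have "\<dots> = Tbase (1/2) (Nf (t + r + real m / 2) x)"
      using Nf_step[OF x, of "t + r + real m / 2" "1/2"] t r by simp
    finally show ?case using Suc by simp
  qed
  define k where "k = \<lfloor>2 * s\<rfloor>"
  define r where "r = s - real_of_int k / 2"
  have r: "0 \<le> r" "r < 1/2" "real (nat k) = real_of_int k" using fl_facts[OF s] by (auto simp: r_def k_def)
  have st: "s + t = t + r + real (nat k) / 2" using r by (simp add: r_def)
  have "Nf (s + t) x = (Tbase (1/2) ^^ nat k) (Tbase r (Nf t x))" unfolding st using gen[of r "nat k"] r by simp
  also have "\<dots> = Nf s (Nf t x)" by (simp add: Nf_def k_def r_def)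
  finally show ?thesis .
qed

lemma Ppow_nonexp: assumes "x \<in> Cset" "y \<in> Cset"
  shows "norm ((Tbase (1/2) ^^ m) x - (Tbase (1/2) ^^ m) y) \<le> norm (x - y)"
proof (induction m)
  case 0 then show ?case by simp
next
  case (Suc m)
  have "norm ((Tbase (1/2) ^^ Suc m) x - (Tbase (1/2) ^^ Suc m) y) \<le>
     norm ((Tbase (1/2) ^^ m) x - (Tbase (1/2) ^^ m) y)"
    using Tbase_nonexp[OF Ppow_C[OF assms(1)] Ppow_C[OF assms(2)], of "1/2" m] by simp
  then show ?case using Suc by linarith
qed

lemma Nf_nonexp: assumes x: "x \<in> Cset" and y: "y \<in> Cset" and t: "0 \<le> t"
  shows "norm (Nf t x - Nf t y) \<le> norm (x - y)"
proof -
  define r where "r = t - real_of_int \<lfloor>2 * t\<rfloor> / 2"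
  have r: "0 \<le> r" "r \<le> 1" using fl_facts[OF t] by (auto simp: r_def)
  have "norm (Nf t x - Nf t y) \<le> norm (Tbase r x - Tbase r y)"
    unfolding Nf_def r_def[symmetric] o_apply
    by (rule Ppow_nonexp) (use Tbase_C x y r in auto)
  also have "\<dots> \<le> norm (x - y)" using Tbase_nonexp[OF x y r] .
  finally show ?thesis .
qed

lemma Nf_near: assumes x: "x \<in> Cset" and t: "0 \<le> t" and h: "0 \<le> h" "h \<le> 1/2"
  shows "norm (Nf (t + h) x - Nf t x) \<le> h"
  using Nf_step[OF x t h] Tbase_near[OF Nf_C[OF x t], of h] h by simp

lemma Nf_lip: assumes x: "x \<in> Cset" and a: "0 \<le> a" and b: "0 \<le> b" and ab: "\<bar>a - b\<bar> \<le> 1/2"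
  shows "dist (Nf a x) (Nf b x) \<le> \<bar>a - b\<bar>"
proof (cases "a \<le> b")
  case True
  then show ?thesis using Nf_near[OF x a, of "b - a"] ab by (simp add: dist_norm norm_minus_commute)
next
  case False
  then show ?thesis using Nf_near[OF x b, of "a - b"] ab by (simp add: dist_norm)
qed

lemma Tsg_cont: assumes x: "x \<in> Cset" shows "continuous_on {0..} (\<lambda>t. Tsg t x)"
proof -
  have "continuous_on {0..} (\<lambda>t. Nf t x)"
    unfolding continuous_on_iff
  proof (intro ballI allI impI)
    fix t e :: real assume t: "t \<in> {0..}" and e: "0 < e"
    show "\<exists>d>0. \<forall>x'\<in>{0..}. dist x' t < d \<longrightarrow> dist (Nf x' x) (Nf t x) < e"
    proof (intro exI[of _ "min e (1/2)"] conjI ballI impI)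
      fix t' :: real assume "t' \<in> {0..}" "dist t' t < min e (1/2)"
      then show "dist (Nf t' x) (Nf t x) < e"
        using Nf_lip[OF x, of t' t] t by (auto simp: dist_real_def)
    qed (use e in auto)
  qed
  then show ?thesis by (rule continuous_on_cong[THEN iffD1, rotated 2]) (auto simp: Tsg_Nf[OF x])
qed



definition gf :: "real \<Rightarrow> omega \<Rightarrow> real" where
  "gf s w = (if Rep_omega w = -1 then 0 else max 0 (1 - \<bar>Rep_omega w - s + 1\<bar>))"

definition g :: "real \<Rightarrow> E" where "g s = Bcontfun (gf s)"

lemma L1_gf: "L1 (gf s)"
  unfolding L1_def
proof (intro conjI allI impI)
  fix w show "0 \<le> gf s w" "gf s w \<le> 1" by (auto simp: gf_def)
next
  fix u1 u2 :: real assume "0 \<le> u1" "0 \<le> u2"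
  then show "\<bar>gf s (pt u1) - gf s (pt u2)\<bar> \<le> \<bar>u1 - u2\<bar>"
    by (simp add: gf_def)
qed

lemma g_app: "apply_bcontfun (g s) = gf s" by (simp add: g_def L1_Bc L1_gf)
lemma g_C: "g s \<in> Cset" by (simp add: g_def L1_Cset L1_gf)

lemma g0: "g 0 = 0"
proof (rule bcontfun_eqI)
  fix w show "apply_bcontfun (g 0) w = apply_bcontfun 0 w"
    unfolding g_app using Rep_cases[of w] by (auto simp: gf_def)
qed

lemma alpha_g: assumes "0 \<le> v" shows "alpha (g s) v = max 0 (min 1 (s - v))"
proof (rule antisym)
  show "alpha (g s) v \<le> max 0 (min 1 (s - v))"
  proof (rule alpha_least)
    fix w assume w: "Rep_omega w = -1 \<or> Rep_omega w \<ge> v"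
    show "apply_bcontfun (g s) w \<le> max 0 (min 1 (s - v))"
      unfolding g_app gf_def using w by auto
  qed
  show "max 0 (min 1 (s - v)) \<le> alpha (g s) v"
  proof (cases "s - v \<le> 0")
    case True then show ?thesis using alpha_bounds[OF g_C, of s v] by simp
  next
    case False
    define r where "r = max v (s - 1)"
    have r: "0 \<le> r" "v \<le> r" using assms by (auto simp: r_def)
    have "apply_bcontfun (g s) (pt r) \<le> alpha (g s) v" using alpha_ub[OF g_C, of "pt r" v] r by simp
    moreover have "apply_bcontfun (g s) (pt r) = max 0 (1 - \<bar>r - s + 1\<bar>)"
      using r by (simp add: g_app gf_def)
    moreover have "max 0 (min 1 (s - v)) \<le> max 0 (1 - \<bar>r - s + 1\<bar>)"
      using False by (simp add: r_def)
    ultimately show ?thesis by linarith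
  qed
qed

lemma Tbase_g: assumes s: "0 \<le> s" and h: "0 \<le> h" "h \<le> 1"
  shows "Tbase h (g s) = g (s + h)"
proof (rule bcontfun_eqI)
  fix w
  show "apply_bcontfun (Tbase h (g s)) w = apply_bcontfun (g (s + h)) w"
    unfolding Tbase_app[OF g_C h] g_app
  proof (rule om_cases[of _ w])
    show "Tbase_fun h (g s) (pt (- 1)) = gf (s + h) (pt (- 1))"
      by (simp add: TF_m1 g_app gf_def)
  next
    fix u :: real assume u: "0 \<le> u"
    show "Tbase_fun h (g s) (pt u) = gf (s + h) (pt u)"
    proof (cases "h \<le> u")
      case True then show ?thesis using h u by (simp add: TF_ge g_app gf_def algebra_simps)
    next
      case False
      then have uu: "u \<le> h" by simp
      have al: "alpha (g s) (1 - h + u) = max 0 (min 1 (s - (1 - h + u)))"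
        using alpha_g[of "1 - h + u" s] h u by simp
      show ?thesis unfolding TF_lt[OF u uu] al using s h u uu
        by (simp add: g_app gf_def cl_def)
    qed
  qed
qed

lemma Ppow_g: assumes "0 \<le> r" shows "(Tbase (1/2) ^^ m) (g r) = g (r + real m / 2)"
proof (induction m)
  case 0 then show ?case by simp
next
  case (Suc m)
  have "(Tbase (1/2) ^^ Suc m) (g r) = Tbase (1/2) (g (r + real m / 2))" using Suc by simp
  also have "\<dots> = g (r + real m / 2 + 1/2)" using Tbase_g[of "r + real m / 2" "1/2"] assms by simp
  moreover have "r + real m / 2 + 1/2 = r + real (Suc m) / 2" by (simp add: field_simps)
  ultimately show ?case by simp
qed

lemma orbit: assumes "0 \<le> s" shows "Tsg s 0 = g s"
proof -
  have z: "(0::E) \<in> Cset" using g_C g0 by metis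
  define r where "r = s - real_of_int \<lfloor>2 * s\<rfloor> / 2"
  have r: "0 \<le> r" "r \<le> 1" "real (nat \<lfloor>2 * s\<rfloor>) = real_of_int \<lfloor>2 * s\<rfloor>"
    using fl_facts[OF assms] by (auto simp: r_def)
  have "Tsg s 0 = (Tbase (1/2) ^^ nat \<lfloor>2 * s\<rfloor>) (Tbase r (g 0))"
    unfolding Tsg_Nf[OF z assms] g0 by (simp add: Nf_def r_def)
  also have "\<dots> = g s" using Tbase_g[of 0 r] r Ppow_g[of r "nat \<lfloor>2 * s\<rfloor>"] by (simp add: r_def)
  finally show ?thesis .
qed



instance bcontfun :: (metric_space, banach) banach ..

lemma eval_cont: "continuous_on UNIV (\<lambda>x::E. apply_bcontfun x w)"
  unfolding continuous_on_iff
proof (intro ballI allI impI)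
  fix x :: E and e :: real assume "0 < e"
  show "\<exists>d>0. \<forall>x'\<in>UNIV. dist x' x < d \<longrightarrow> dist (apply_bcontfun x' w) (apply_bcontfun x w) < e"
  proof (intro exI[of _ e] conjI ballI impI)
    fix x' :: E assume "dist x' x < e"
    moreover have "dist (apply_bcontfun x' w) (apply_bcontfun x w) \<le> dist x' x"
      using norm_bounded[of "x' - x" w] by (simp add: dist_norm)
    ultimately show "dist (apply_bcontfun x' w) (apply_bcontfun x w) < e" by linarith
  qed (use \<open>0 < e\<close> in auto)
qed

lemma Cset_closed: "closed Cset"
proof -
  have c1: "closed {x::E. 0 \<le> apply_bcontfun x w \<and> apply_bcontfun x w \<le> 1}" for w
    by (intro closed_Collect_conj closed_Collect_le eval_cont continuous_on_const)
  have c2: "closed {x::E. 0 \<le> u1 \<longrightarrow> (\<forall>u2\<ge>0. \<bar>apply_bcontfun x (pt u1) - apply_bcontfun x (pt u2)\<bar> \<le> \<bar>u1 - u2\<bar>)}" for u1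
  proof (cases "0 \<le> u1")
    case True
    have "closed {x::E. 0 \<le> u2 \<longrightarrow> \<bar>apply_bcontfun x (pt u1) - apply_bcontfun x (pt u2)\<bar> \<le> \<bar>u1 - u2\<bar>}" for u2
    proof (cases "0 \<le> u2")
      case True
      then show ?thesis
        by (simp, intro closed_Collect_le continuous_on_const continuous_intros eval_cont)
    qed simp
    then show ?thesis using True by (simp, intro closed_Collect_all) simp
  qed simp
  have eqC: "Cset = {x. (\<forall>w. 0 \<le> apply_bcontfun x w \<and> apply_bcontfun x w \<le> 1)} \<inter>
     {x. \<forall>u1. 0 \<le> u1 \<longrightarrow> (\<forall>u2\<ge>0. \<bar>apply_bcontfun x (pt u1) - apply_bcontfun x (pt u2)\<bar> \<le> \<bar>u1 - u2\<bar>)}"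
    by (auto simp: Cset_def)
  have A1: "closed {x::E. (\<forall>w. 0 \<le> apply_bcontfun x w \<and> apply_bcontfun x w \<le> 1)}"
    by (rule closed_Collect_all) (rule c1)
  have A2: "closed {x::E. \<forall>u1. 0 \<le> u1 \<longrightarrow> (\<forall>u2\<ge>0. \<bar>apply_bcontfun x (pt u1) - apply_bcontfun x (pt u2)\<bar> \<le> \<bar>u1 - u2\<bar>)}"
    by (rule closed_Collect_all) (rule c2)
  show ?thesis unfolding eqC by (rule closed_Int[OF A1 A2])
qed

lemma Cset_convex: "convex Cset"
proof (rule convexI)
  fix x y :: E and a b :: real
  assume x: "x \<in> Cset" and y: "y \<in> Cset" and ab: "0 \<le> a" "0 \<le> b" "a + b = 1"
  show "a *\<^sub>R x + b *\<^sub>R y \<in> Cset"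
    unfolding Cset_def
  proof (simp, intro conjI allI impI)
    fix w
    have "0 \<le> a * apply_bcontfun x w" "0 \<le> b * apply_bcontfun y w"
      using Cset_b[OF x, of w] Cset_b[OF y, of w] ab by auto
    then show "0 \<le> a * apply_bcontfun x w + b * apply_bcontfun y w" by simp
    have "a * apply_bcontfun x w \<le> a" "b * apply_bcontfun y w \<le> b"
      using Cset_b[OF x, of w] Cset_b[OF y, of w] ab by (auto intro: mult_left_le)
    then show "a * apply_bcontfun x w + b * apply_bcontfun y w \<le> 1" using ab by linarith
  next
    fix u1 u2 :: real assume u: "0 \<le> u1" "0 \<le> u2"
    let ?d = "\<bar>u1 - u2\<bar>"
    have "\<bar>a * (apply_bcontfun x (pt u1) - apply_bcontfun x (pt u2))\<bar> \<le> a * ?d"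
      using Cset_lip[OF x u] ab by (simp add: abs_mult mult_left_mono)
    moreover have "\<bar>b * (apply_bcontfun y (pt u1) - apply_bcontfun y (pt u2))\<bar> \<le> b * ?d"
      using Cset_lip[OF y u] ab by (simp add: abs_mult mult_left_mono)
    ultimately have "\<bar>a * (apply_bcontfun x (pt u1) - apply_bcontfun x (pt u2)) +
        b * (apply_bcontfun y (pt u1) - apply_bcontfun y (pt u2))\<bar> \<le> (a + b) * ?d"
      by (smt (verit) distrib_right)
    then show "\<bar>a * apply_bcontfun x (pt u1) + b * apply_bcontfun y (pt u1) -
        (a * apply_bcontfun x (pt u2) + b * apply_bcontfun y (pt u2))\<bar> \<le> ?d"
      using ab by (simp add: algebra_simps)
  qed
qed

lemma zero_C: "(0::E) \<in> Cset" using g_C g0 by metis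

lemma Tsg_semigroup: "nonexp_semigroup Cset Tsg"
  unfolding nonexp_semigroup_def
proof (intro conjI allI impI ballI)
  fix t :: real and x assume "0 \<le> t" "x \<in> Cset"
  then show "Tsg t x \<in> Cset" using Tsg_Nf Nf_C by simp
next
  fix t :: real and x y assume "0 \<le> t" "x \<in> Cset" "y \<in> Cset"
  then show "norm (Tsg t x - Tsg t y) \<le> norm (x - y)" using Tsg_Nf Nf_nonexp by simp
next
  fix x assume "x \<in> Cset"
  then show "Tsg 0 x = x" by (simp add: Tsg_def Tbase0)
next
  fix s t :: real and x assume "0 \<le> s" "0 \<le> t" "x \<in> Cset"
  then show "Tsg (s + t) x = Tsg s (Tsg t x)"
    using Tsg_Nf Nf_semi Nf_C by simp
next
  fix x assume "x \<in> Cset"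
  then show "continuous_on {0..} (\<lambda>t. Tsg t x)" by (rule Tsg_cont)
qed

lemma bl_eval: "bounded_linear (\<lambda>f::E. apply_bcontfun f w)"
proof (rule bounded_linear_intro[where K=1])
  fix f :: E show "norm (apply_bcontfun f w) \<le> norm f * 1" using norm_bounded[of f w] by simp
qed simp_all

lemma gf_cont: "continuous_on UNIV (\<lambda>s. gf s w)"
proof (cases "Rep_omega w = -1")
  case True then show ?thesis by (simp add: gf_def)
next
  case False then show ?thesis by (simp add: gf_def, intro continuous_intros)
qed

lemma int_bound: assumes t: "0 \<le> t"
  shows "norm (integral {0..t} (\<lambda>s. Tsg s 0)) \<le> 2"
proof (rule norm_bound)
  fix w
  have cont: "continuous_on {0..t} (\<lambda>s. Tsg s 0)"
    using Tsg_cont[OF zero_C] by (rule continuous_on_subset) auto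
  then have int: "(\<lambda>s. Tsg s 0) integrable_on {0..t}" by (rule integrable_continuous_interval)
  have "apply_bcontfun (integral {0..t} (\<lambda>s. Tsg s 0)) w =
      integral {0..t} ((\<lambda>f. apply_bcontfun f w) \<circ> (\<lambda>s. Tsg s 0))"
    using integral_linear[OF int bl_eval] by simp
  also have "\<dots> = integral {0..t} (\<lambda>s. gf s w)"
    by (rule integral_cong) (simp add: orbit g_app)
  finally have eq: "apply_bcontfun (integral {0..t} (\<lambda>s. Tsg s 0)) w = integral {0..t} (\<lambda>s. gf s w)" .
  have gi: "(\<lambda>s. gf s w) integrable_on {0..t}"
    by (rule integrable_continuous_interval, rule continuous_on_subset[OF gf_cont]) simp
  have lo: "0 \<le> integral {0..t} (\<lambda>s. gf s w)"
    by (rule integral_nonneg[OF gi]) (simp add: gf_def)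
  have hi: "integral {0..t} (\<lambda>s. gf s w) \<le> 2"
  proof (cases "Rep_omega w = -1")
    case True then show ?thesis by (simp add: gf_def)
  next
    case False
    define c where "c = Rep_omega w"
    let ?F = "\<lambda>s::real. if s \<in> {c..c+2} then (1::real) else 0"
    have Fi: "?F integrable_on {0..t}"
      unfolding integrable_restrict_Int Int_atLeastAtMost by (rule integrable_const_ivl)
    have "integral {0..t} (\<lambda>s. gf s w) \<le> integral {0..t} ?F"
      by (rule integral_le[OF gi Fi]) (auto simp: gf_def c_def[symmetric] False)
    also have "integral {0..t} ?F = (if max c 0 \<le> min (c + 2) t then min (c + 2) t - max c 0 else 0)"
      unfolding integral_restrict_Int Int_atLeastAtMost by simp
    also have "\<dots> \<le> 2" using Rep_cases[of w] False by (simp add: c_def min_def max_def)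
    finally show ?thesis .
  qed
  show "norm (apply_bcontfun (integral {0..t} (\<lambda>s. Tsg s 0)) w) \<le> 2"
    unfolding eq using lo hi by simp
qed

theorem mainTheorem1:
  shows "closed Cset \<and> convex Cset \<and> nonexp_semigroup Cset Tsg \<and>
         (0::E) \<in> Cset \<and> \<not> common_fixed_point Cset Tsg 0 \<and>
         (\<forall>t\<ge>0. (\<lambda>s. Tsg s 0) integrable_on {0..t}) \<and>
         ((\<lambda>t. norm ((1 / t) *\<^sub>R integral {0..t} (\<lambda>s. Tsg s 0) - 0)) \<longlongrightarrow> 0) at_top"
proof (intro conjI allI impI)
  show "closed Cset" by (rule Cset_closed)
  show "convex Cset" by (rule Cset_convex)
  show "nonexp_semigroup Cset Tsg" by (rule Tsg_semigroup)
  show "(0::E) \<in> Cset" by (rule zero_C)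
  show "\<not> common_fixed_point Cset Tsg 0"
  proof
    assume "common_fixed_point Cset Tsg 0"
    then have "Tsg 1 0 = 0" by (simp add: common_fixed_point_def)
    then have "apply_bcontfun (g 1) (pt 0) = 0" using orbit[of 1] by simp
    then show False by (simp add: g_app gf_def)
  qed
  fix t :: real assume "0 \<le> t"
  show "(\<lambda>s. Tsg s 0) integrable_on {0..t}"
    by (rule integrable_continuous_interval, rule continuous_on_subset[OF Tsg_cont[OF zero_C]]) auto
next
  show "((\<lambda>t. norm ((1 / t) *\<^sub>R integral {0..t} (\<lambda>s. Tsg s 0) - 0)) \<longlongrightarrow> 0) at_top"
  proof (rule Lim_null_comparison)
    show "\<forall>\<^sub>F t in at_top. norm (norm ((1 / t) *\<^sub>R integral {0..t} (\<lambda>s. Tsg s 0) - 0)) \<le> 2 / t"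
      using eventually_gt_at_top[of 0]
    proof eventually_elim
      case (elim t)
      have "norm ((1 / t) *\<^sub>R integral {0..t} (\<lambda>s. Tsg s 0)) = (1 / t) * norm (integral {0..t} (\<lambda>s. Tsg s 0))"
        using elim by simp
      also have "\<dots> \<le> (1 / t) * 2" using int_bound[of t] elim by (intro mult_left_mono) auto
      finally show ?case by simp
    qed
    show "((\<lambda>t::real. 2 / t) \<longlongrightarrow> 0) at_top"
      by (rule tendsto_divide_0[OF tendsto_const filterlim_at_top_imp_at_infinity[OF filterlim_ident]])
  qed
qed

end
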